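(* Let $\mathcal{F}\subseteq\mathcal{P}(\omega)$ be compact (as a subset of $2^\omega$). Then $\mathbb{P}_{\mathcal{F}}$ is a closed subset of $\mathcal{K}(\mathcal{F})$ endowed with the Vietoris topology. Consequently $\mathbb{P}_{\mathcal{F}}$ is a compact subspace of $\mathcal{K}(\mathcal{F})$.
   Context: $\omega=\{1,2,3,\dots\}$. Subsets of $\omega$ are identified with their characteristic functions, i.e. with elements of the Cantor space $2^\omega$ (product topology); topological notions (closed, compact) for families $\mathcal{F}\subseteq\mathcal{P}(\omega)$ refer to this identification. A partition is a family $\mathcal{P}\subseteq\mathcal{P}(\omega)$ such that $\emptyset\in\mathcal{P}$, $\bigcup\mathcal{P}=\omega$, and the elements of $\mathcal{P}$ are pairwise disjoint. $\mathbb{P}_\mathcal{F}$ denotes the set of all partitions $\mathcal{P}$ with $\mathcal{P}\subseteq\mathcal{F}$. Every partition is a closed subset of $2^\omega$. For a compact space $X$, $\mathcal{K}(X)$ is the family of closed subsets of $X$ with the Vietoris topology, generated by the sets $\langle U_1,\dots,U_n\rangle=\{K\in\mathcal{K}(X): K\subseteq\bigcup_{i\le n}U_i \text{ and } K\cap U_i\neq\emptyset \text{ for all } i\le n\}$ with $U_i$ open in $X$. *)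

theory Defs
  imports "HOL-Analysis.Analysis"
begin

definition omega :: "nat set" where
  "omega = {1..}"

text \<open>Cantor space 2^omega: subsets of omega identified with their characteristic
  functions omega -> {0,1} (bool), carrying the product of discrete topologies.\<close>
definition cantor_space :: "nat set topology" where
  "cantor_space = pullback_topology (Pow omega) (\<lambda>A. restrict (\<lambda>n. n \<in> A) omega)
      (product_topology (\<lambda>_. discrete_topology (UNIV :: bool set)) omega)"

definition vietoris_basic :: "'a topology \<Rightarrow> 'a set list \<Rightarrow> 'a set set" where
  "vietoris_basic X Us = {K. closedin X K \<and> K \<subseteq> \<Union>(set Us) \<and> (\<forall>U\<in>set Us. K \<inter> U \<noteq> {})}"

definition vietoris :: "'a topology \<Rightarrow> 'a set topology" where
  "vietoris X = subtopology
      (topology_generated_by {vietoris_basic X Us | Us. \<forall>U\<in>set Us. openin X U})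
      {K. closedin X K}"

definition is_partition :: "nat set set \<Rightarrow> bool" where
  "is_partition P \<longleftrightarrow> {} \<in> P \<and> \<Union>P = omega \<and> (\<forall>A\<in>P. \<forall>B\<in>P. A \<noteq> B \<longrightarrow> A \<inter> B = {})"

definition partitions_in :: "nat set set \<Rightarrow> nat set set set" where
  "partitions_in F = {P. is_partition P \<and> P \<subseteq> F}"

end

theory Submission
  imports Defs
begin

lemma topspace_cantor [simp]: "topspace cantor_space = Pow omega"
  unfolding cantor_space_def topspace_pullback_topology by auto

lemma coord_cont:
  assumes k: "k \<in> omega"
  shows "continuous_map cantor_space (discrete_topology UNIV) (\<lambda>D. k \<in> D)"
proof -
  have "continuous_map (product_topology (\<lambda>_. discrete_topology (UNIV::bool set)) omega)
          (discrete_topology UNIV) (\<lambda>h. h k)"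
    using continuous_map_product_projection[OF k, of "\<lambda>_. discrete_topology (UNIV::bool set)"] by simp
  then have "continuous_map cantor_space (discrete_topology UNIV)
      ((\<lambda>h. h k) \<circ> (\<lambda>A. restrict (\<lambda>n. n \<in> A) omega))"
    unfolding cantor_space_def by (rule continuous_map_pullback)
  moreover have "((\<lambda>h. h k) \<circ> (\<lambda>A. restrict (\<lambda>n. n \<in> A) omega)) = (\<lambda>D. k \<in> D)"
    using k by auto
  ultimately show ?thesis by simp
qed

lemma coord_open:
  assumes k: "k \<in> omega"
  shows "openin (subtopology cantor_space F) {D \<in> topspace (subtopology cantor_space F). (k \<in> D) \<in> S}"
proof -
  have "continuous_map (subtopology cantor_space F) (discrete_topology UNIV) (\<lambda>D. k \<in> D)"
    using coord_cont[OF k] by (rule continuous_map_from_subtopology)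
  then show ?thesis by (rule openin_continuous_map_preimage) simp
qed

lemma vietoris_topspace: "topspace (vietoris X) = {K. closedin X K}"
proof -
  have "{K. closedin X K} \<subseteq> \<Union>{vietoris_basic X Us | Us. \<forall>U\<in>set Us. openin X U}"
  proof
    fix K assume K: "K \<in> {K. closedin X K}"
    show "K \<in> \<Union>{vietoris_basic X Us | Us. \<forall>U\<in>set Us. openin X U}"
    proof (cases "K = {}")
      case True
      then have "K \<in> vietoris_basic X []" using K by (simp add: vietoris_basic_def)
      then show ?thesis by (intro UnionI[of "vietoris_basic X []"]) auto
    next
      case False
      then have "K \<in> vietoris_basic X [topspace X]" using K closedin_subset
        by (auto simp: vietoris_basic_def)
      then show ?thesis by (intro UnionI[of "vietoris_basic X [topspace X]"]) auto
    qed
  qed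
  then show ?thesis unfolding vietoris_def by auto
qed

lemma vietoris_basic_open:
  assumes "\<forall>U\<in>set Us. openin X U"
  shows "openin (vietoris X) (vietoris_basic X Us)"
proof -
  have "openin (topology_generated_by {vietoris_basic X Us | Us. \<forall>U\<in>set Us. openin X U})
          (vietoris_basic X Us)"
    by (rule topology_generated_by_Basis) (use assms in blast)
  moreover have "vietoris_basic X Us = vietoris_basic X Us \<inter> {K. closedin X K}"
    by (auto simp: vietoris_basic_def)
  ultimately show ?thesis unfolding vietoris_def openin_subtopology by blast
qed

definition subb :: "'a topology \<Rightarrow> 'a set set set" where
  "subb X = {{K. closedin X K \<and> K \<subseteq> U} | U. openin X U}
          \<union> {{K. closedin X K \<and> K \<inter> U \<noteq> {}} | U. openin X U}"

definition Tsub :: "'a topology \<Rightarrow> 'a set topology" where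
  "Tsub X = topology (arbitrary union_of (finite intersection_of (\<lambda>x. x \<in> subb X)
                relative_to {K. closedin X K}))"

lemma Tsub_open_subb:
  assumes "s \<in> subb X"
  shows "openin (Tsub X) s"
proof -
  have sub: "s \<subseteq> {K. closedin X K}" using assms unfolding subb_def by auto
  have "(finite intersection_of (\<lambda>x. x \<in> subb X) relative_to {K. closedin X K}) s"
    unfolding relative_to_def
    by (rule exI[of _ s]) (use assms sub finite_intersection_of_inc in auto)
  then show ?thesis unfolding Tsub_def openin_subbase by (rule arbitrary_union_of_inc)
qed

lemma topspace_Tsub: "topspace (Tsub X) = {K. closedin X K}"
  unfolding Tsub_def by simp

lemma Tsub_lower_list:
  assumes "\<forall>U\<in>set Us. openin X U"
  shows "openin (Tsub X) {K. closedin X K \<and> (\<forall>U\<in>set Us. K \<inter> U \<noteq> {})}"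
  using assms
proof (induction Us)
  case Nil
  then show ?case using openin_topspace[of "Tsub X"] by (simp add: topspace_Tsub)
next
  case (Cons U Us)
  have "{K. closedin X K \<and> (\<forall>V\<in>set (U#Us). K \<inter> V \<noteq> {})}
       = {K. closedin X K \<and> K \<inter> U \<noteq> {}} \<inter> {K. closedin X K \<and> (\<forall>U\<in>set Us. K \<inter> U \<noteq> {})}"
    by auto
  moreover have "openin (Tsub X) {K. closedin X K \<and> K \<inter> U \<noteq> {}}"
    by (rule Tsub_open_subb) (use Cons.prems in \<open>auto simp: subb_def\<close>)
  ultimately show ?case using Cons by (simp add: openin_Int)
qed

lemma Tsub_basic:
  assumes "\<forall>U\<in>set Us. openin X U"
  shows "openin (Tsub X) (vietoris_basic X Us)"
proof -
  have "vietoris_basic X Us = {K. closedin X K \<and> K \<subseteq> \<Union>(set Us)}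
          \<inter> {K. closedin X K \<and> (\<forall>U\<in>set Us. K \<inter> U \<noteq> {})}"
    by (auto simp: vietoris_basic_def)
  moreover have "openin (Tsub X) {K. closedin X K \<and> K \<subseteq> \<Union>(set Us)}"
    by (rule Tsub_open_subb) (use assms in \<open>auto simp: subb_def\<close>)
  ultimately show ?thesis using Tsub_lower_list[OF assms] by (simp add: openin_Int)
qed

lemma vietoris_open_Tsub:
  assumes "openin (vietoris X) V"
  shows "openin (Tsub X) V"
proof -
  let ?B = "{vietoris_basic X Us | Us. \<forall>U\<in>set Us. openin X U}"
  let ?C = "{K. closedin X K}"
  obtain W where W: "openin (topology_generated_by ?B) W" and V: "V = W \<inter> ?C"
    using assms unfolding vietoris_def openin_subtopology by blast
  have "generate_topology_on ?B W" using W by (rule openin_topology_generated_by)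
  then have "openin (Tsub X) (W \<inter> ?C)"
  proof (induction rule: generate_topology_on.induct)
    case Empty
    then show ?case by simp
  next
    case (Int a b)
    have "a \<inter> b \<inter> ?C = (a \<inter> ?C) \<inter> (b \<inter> ?C)" by auto
    then show ?case using Int by (simp add: openin_Int)
  next
    case (UN K)
    have "\<Union>K \<inter> ?C = \<Union>((\<lambda>k. k \<inter> ?C) ` K)" by auto
    moreover have "openin (Tsub X) (\<Union>((\<lambda>k. k \<inter> ?C) ` K))"
      using UN.IH by (intro openin_Union) blast
    ultimately show ?case by simp
  next
    case (Basis s)
    then obtain Us where Us: "\<forall>U\<in>set Us. openin X U" and s: "s = vietoris_basic X Us" by blast
    have "s \<inter> ?C = vietoris_basic X Us" using s by (auto simp: vietoris_basic_def)
    then show ?case using Tsub_basic[OF Us] by simp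
  qed
  then show ?thesis using V by simp
qed

lemma Tsub_compact:
  assumes X: "compact_space X"
  shows "compact_space (Tsub X)"
  unfolding Tsub_def
proof (rule Alexander_subbase_alt)
  let ?C = "{K. closedin X K}"
  show "?C \<subseteq> \<Union>(subb X)"
  proof
    fix K assume "K \<in> ?C"
    then have "K \<in> {K. closedin X K \<and> K \<subseteq> topspace X}" using closedin_subset by auto
    moreover have "{K. closedin X K \<and> K \<subseteq> topspace X} \<in> subb X" unfolding subb_def by auto
    ultimately show "K \<in> \<Union>(subb X)" by blast
  qed
  show "\<exists>C'. finite C' \<and> C' \<subseteq> Cov \<and> ?C \<subseteq> \<Union>C'"
    if Cov: "Cov \<subseteq> subb X" and cov: "?C \<subseteq> \<Union>Cov" for Cov
  proof -
    define L where "L = {U. openin X U \<and> {K. closedin X K \<and> K \<inter> U \<noteq> {}} \<in> Cov}"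
    define K0 where "K0 = topspace X - \<Union>L"
    have oL: "openin X (\<Union>L)" unfolding L_def by auto
    then have "closedin X K0" unfolding K0_def by auto
    then obtain s where s: "s \<in> Cov" "K0 \<in> s" using cov by blast
    then have "s \<in> subb X" using Cov by blast
    then obtain U0 where U0: "openin X U0" "s = {K. closedin X K \<and> K \<subseteq> U0}"
    proof (unfold subb_def, elim UnE CollectE exE conjE)
      fix U assume U: "openin X U" "s = {K. closedin X K \<and> K \<inter> U \<noteq> {}}"
      then have "U \<in> L" using s unfolding L_def by auto
      moreover have "K0 \<inter> U \<noteq> {}" using s U by auto
      ultimately have False unfolding K0_def by blast
      then show ?thesis by blast
    qed auto
    have "K0 \<subseteq> U0" using s U0 by auto
    then have "topspace X \<subseteq> \<Union>(insert U0 L)" unfolding K0_def by auto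
    moreover have "\<forall>U\<in>insert U0 L. openin X U" using U0 unfolding L_def by auto
    ultimately obtain G where G: "finite G" "G \<subseteq> insert U0 L" "topspace X \<subseteq> \<Union>G"
      using X unfolding compact_space_alt by meson
    define C' where "C' = insert s ((\<lambda>U. {K. closedin X K \<and> K \<inter> U \<noteq> {}}) ` (G - {U0}))"
    have "finite C'" unfolding C'_def using G by auto
    moreover have "C' \<subseteq> Cov" unfolding C'_def using s G unfolding L_def by auto
    moreover have "?C \<subseteq> \<Union>C'"
    proof
      fix K assume K: "K \<in> ?C"
      show "K \<in> \<Union>C'"
      proof (cases "\<exists>U\<in>G - {U0}. K \<inter> U \<noteq> {}")
        case True
        then show ?thesis using K unfolding C'_def by blast
      next
        case False
        have "K \<subseteq> topspace X" using K closedin_subset by auto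
        then have "K \<subseteq> U0" using False G(3) by blast
        then show ?thesis using K U0 unfolding C'_def by auto
      qed
    qed
    ultimately show ?thesis by blast
  qed
qed auto

lemma vietoris_compact:
  assumes X: "compact_space X"
  shows "compact_space (vietoris X)"
  unfolding compact_space_alt
proof (intro allI impI)
  fix \<U> assume H: "(\<forall>U\<in>\<U>. openin (vietoris X) U) \<and> topspace (vietoris X) \<subseteq> \<Union>\<U>"
  then have "(\<forall>U\<in>\<U>. openin (Tsub X) U) \<and> topspace (Tsub X) \<subseteq> \<Union>\<U>"
    using vietoris_open_Tsub by (auto simp: vietoris_topspace topspace_Tsub)
  then obtain G where "finite G \<and> G \<subseteq> \<U> \<and> topspace (Tsub X) \<subseteq> \<Union>G"
    using Tsub_compact[OF X] unfolding compact_space_alt by meson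
  then show "\<exists>G. finite G \<and> G \<subseteq> \<U> \<and> topspace (vietoris X) \<subseteq> \<Union>G"
    by (auto simp: vietoris_topspace topspace_Tsub)
qed

lemma neq_ex: "(A::'a set) \<noteq> B \<Longrightarrow> \<exists>m. (m \<in> A) \<noteq> (m \<in> B)" by auto

lemma topspace_X: "topspace (subtopology cantor_space F) = Pow omega \<inter> F"
  by (simp add: topspace_cantor)

lemma partition_closed:
  assumes P: "is_partition P" "P \<subseteq> F"
  shows "closedin (subtopology cantor_space F) P"
proof -
  let ?X = "subtopology cantor_space F"
  have e: "{} \<in> P" and U: "\<Union>P = omega" and dj: "\<forall>A\<in>P. \<forall>B\<in>P. A \<noteq> B \<longrightarrow> A \<inter> B = {}"
    using P(1) unfolding is_partition_def by auto
  have sub: "P \<subseteq> topspace ?X" using P(2) U by (auto simp: topspace_X)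
  have "openin ?X (topspace ?X - P)"
  proof (subst openin_subopen, intro ballI)
    fix A assume A: "A \<in> topspace ?X - P"
    then have Ao: "A \<subseteq> omega" and AP: "A \<notin> P" by (auto simp: topspace_X)
    then have "A \<noteq> {}" using e by auto
    then obtain n where n: "n \<in> A" by blast
    then have "n \<in> \<Union>P" using Ao U by auto
    then obtain B where B: "B \<in> P" "n \<in> B" by blast
    have "A \<noteq> B" using AP B by auto
    then obtain m where m: "(m \<in> A) \<noteq> (m \<in> B)" using neq_ex by blast
    have Bo: "B \<subseteq> omega" using B U by auto
    have mo: "m \<in> omega" using m Ao Bo by auto
    have no: "n \<in> omega" using n Ao by auto
    define N where "N = {D \<in> topspace ?X. (n \<in> D) \<in> {True}} \<inter> {D \<in> topspace ?X. (m \<in> D) \<in> {m \<in> A}}"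
    have "openin ?X N" unfolding N_def by (intro openin_Int coord_open no mo)
    moreover have "A \<in> N" unfolding N_def using A n by auto
    moreover have "N \<subseteq> topspace ?X - P"
    proof
      fix D assume D: "D \<in> N"
      have "D \<notin> P"
      proof
        assume "D \<in> P"
        moreover have "n \<in> D" using D unfolding N_def by auto
        ultimately have "D = B" using dj[rule_format, OF \<open>D \<in> P\<close> B(1)] B(2) by blast
        then show False using D m unfolding N_def by simp
      qed
      then show "D \<in> topspace ?X - P" using D unfolding N_def by auto
    qed
    ultimately show "\<exists>T. openin ?X T \<and> A \<in> T \<and> T \<subseteq> topspace ?X - P" by blast
  qed
  then show ?thesis using sub unfolding closedin_def by blast
qed

lemma nonpartition_nbhd:
  fixes F :: "nat set set"
  assumes K: "closedin (subtopology cantor_space F) K" and np: "\<not> is_partition K"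
  shows "\<exists>Us. (\<forall>U\<in>set Us. openin (subtopology cantor_space F) U)
            \<and> K \<in> vietoris_basic (subtopology cantor_space F) Us
            \<and> (\<forall>P. is_partition P \<longrightarrow> P \<notin> vietoris_basic (subtopology cantor_space F) Us)"
proof -
  let ?X = "subtopology cantor_space F"
  let ?T = "topspace ?X"
  have Kt: "K \<subseteq> ?T" using closedin_subset[OF K] .
  then have Ko: "\<forall>A\<in>K. A \<subseteq> omega" by (auto simp: topspace_X)
  show ?thesis
  proof (cases "K = {}")
    case True
    have "K \<in> vietoris_basic ?X []" using True by (simp add: vietoris_basic_def)
    moreover have "\<forall>P. is_partition P \<longrightarrow> P \<notin> vietoris_basic ?X []"
      by (auto simp: vietoris_basic_def is_partition_def)
    ultimately show ?thesis by (intro exI[of _ "[]"]) auto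
  next
    case Kne: False
    consider "{} \<notin> K" | "\<Union>K \<noteq> omega" | A B where "A \<in> K" "B \<in> K" "A \<noteq> B" "A \<inter> B \<noteq> {}"
      using np unfolding is_partition_def by blast
    then show ?thesis
    proof cases
      case 1
      define W where "W = (\<Union>k\<in>omega. {D \<in> ?T. (k \<in> D) \<in> {True}})"
      have oW: "openin ?X W" unfolding W_def
      proof (intro openin_Union ballI)
        fix S assume "S \<in> (\<lambda>k. {D \<in> ?T. (k \<in> D) \<in> {True}}) ` omega"
        then obtain k where k: "k \<in> omega" and S: "S = {D \<in> ?T. (k \<in> D) \<in> {True}}" by blast
        show "openin ?X S" unfolding S by (rule coord_open[OF k])
      qed
      have "K \<subseteq> W"
      proof
        fix A assume A: "A \<in> K"
        then have "A \<noteq> {}" using 1 by auto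
        then obtain k where "k \<in> A" by blast
        moreover have "A \<subseteq> omega" "A \<in> ?T" using A Ko Kt by auto
        ultimately show "A \<in> W" unfolding W_def by auto
      qed
      then have "K \<in> vietoris_basic ?X [W]" using K Kne by (auto simp: vietoris_basic_def)
      moreover have "\<forall>P. is_partition P \<longrightarrow> P \<notin> vietoris_basic ?X [W]"
        by (auto simp: vietoris_basic_def is_partition_def W_def)
      ultimately show ?thesis using oW by (intro exI[of _ "[W]"]) auto
    next
      case 2
      have "\<Union>K \<subseteq> omega" using Ko by auto
      then obtain n where n: "n \<in> omega" "n \<notin> \<Union>K" using 2 by blast
      define W where "W = {D \<in> ?T. (n \<in> D) \<in> {False}}"
      have oW: "openin ?X W" unfolding W_def using coord_open[OF n(1)] by blast
      have "K \<subseteq> W" using n Kt unfolding W_def by blast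
      then have "K \<in> vietoris_basic ?X [W]" using K Kne by (auto simp: vietoris_basic_def)
      moreover have "\<forall>P. is_partition P \<longrightarrow> P \<notin> vietoris_basic ?X [W]"
      proof (intro allI impI notI)
        fix P assume "is_partition P" "P \<in> vietoris_basic ?X [W]"
        then have "n \<in> \<Union>P" "P \<subseteq> W" using n by (auto simp: is_partition_def vietoris_basic_def)
        then show False unfolding W_def by auto
      qed
      ultimately show ?thesis using oW by (intro exI[of _ "[W]"]) auto
    next
      case 3
      then obtain n where n: "n \<in> A" "n \<in> B" by blast
      obtain m where m: "(m \<in> A) \<noteq> (m \<in> B)" using 3(3) neq_ex by blast
      have mo: "m \<in> omega" using m Ko 3 by blast
      have no: "n \<in> omega" using n Ko 3 by blast
      define U1 where "U1 = {D \<in> ?T. (n \<in> D) \<in> {True}} \<inter> {D \<in> ?T. (m \<in> D) \<in> {m \<in> A}}"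
      define U2 where "U2 = {D \<in> ?T. (n \<in> D) \<in> {True}} \<inter> {D \<in> ?T. (m \<in> D) \<in> {m \<in> B}}"
      have o1: "openin ?X U1" unfolding U1_def by (intro openin_Int coord_open no mo)
      have o2: "openin ?X U2" unfolding U2_def by (intro openin_Int coord_open no mo)
      have "A \<in> U1" "B \<in> U2" using 3 n Kt unfolding U1_def U2_def by auto
      then have "K \<inter> ?T \<noteq> {}" "K \<inter> U1 \<noteq> {}" "K \<inter> U2 \<noteq> {}" using Kt 3 by blast+
      moreover have "K \<subseteq> \<Union>(set [?T, U1, U2])" using Kt by auto
      ultimately have "K \<in> vietoris_basic ?X [?T, U1, U2]" using K
        unfolding vietoris_basic_def by (simp del: topspace_subtopology topspace_cantor)
      moreover have "\<forall>P. is_partition P \<longrightarrow> P \<notin> vietoris_basic ?X [?T, U1, U2]"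
      proof (intro allI impI notI)
        fix P assume P: "is_partition P" "P \<in> vietoris_basic ?X [?T, U1, U2]"
        then obtain D1 D2 where D: "D1 \<in> P" "D1 \<in> U1" "D2 \<in> P" "D2 \<in> U2"
          by (auto simp: vietoris_basic_def)
        have "D1 \<noteq> D2" using D m unfolding U1_def U2_def by auto
        moreover have "n \<in> D1 \<inter> D2" using D unfolding U1_def U2_def by auto
        ultimately show False using P(1) D unfolding is_partition_def by blast
      qed
      moreover have oT: "openin ?X ?T" by (rule openin_topspace)
      ultimately show ?thesis using o1 o2 by (intro exI[of _ "[?T, U1, U2]"]) auto
    qed
  qed
qed

theorem mainTheorem1:
  fixes F :: "nat set set"
  assumes "F \<subseteq> Pow omega"
    and "compactin cantor_space F"
  shows "closedin (vietoris (subtopology cantor_space F)) (partitions_in F)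
       \<and> compactin (vietoris (subtopology cantor_space F)) (partitions_in F)"
proof -
  let ?X = "subtopology cantor_space F"
  let ?V = "vietoris ?X"
  have sub: "partitions_in F \<subseteq> topspace ?V"
    using partition_closed by (auto simp: vietoris_topspace partitions_in_def)
  have "openin ?V (topspace ?V - partitions_in F)"
  proof (subst openin_subopen, intro ballI)
    fix K assume K: "K \<in> topspace ?V - partitions_in F"
    then have Kc: "closedin ?X K" by (simp add: vietoris_topspace)
    then have "K \<subseteq> F" using closedin_subset[OF Kc] by auto
    then have "\<not> is_partition K" using K by (auto simp: partitions_in_def)
    then obtain Us where Us: "\<forall>U\<in>set Us. openin ?X U" "K \<in> vietoris_basic ?X Us"
        "\<forall>P. is_partition P \<longrightarrow> P \<notin> vietoris_basic ?X Us"
      using nonpartition_nbhd[OF Kc] by blast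
    have "vietoris_basic ?X Us \<subseteq> topspace ?V - partitions_in F"
      using Us(3) by (auto simp: vietoris_topspace vietoris_basic_def partitions_in_def)
    then show "\<exists>T. openin ?V T \<and> K \<in> T \<and> T \<subseteq> topspace ?V - partitions_in F"
      using vietoris_basic_open[OF Us(1)] Us(2) by blast
  qed
  then have cl: "closedin ?V (partitions_in F)" using sub unfolding closedin_def by blast
  have "compact_space ?X" using assms(2) by (rule compact_space_subtopology)
  then have "compact_space ?V" by (rule vietoris_compact)
  then show ?thesis using cl closedin_compact_space by blast
qed

end
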